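(* Let $q$ be an odd prime power and $\varphi_4$ the coloring defined below (with $d=4$). No set $S\subseteq(\mathbb{F}_q^* )^4$ of $8$ vectors has a leftover structure under $\varphi_4$.
   Context: Let $d=4$. $\mathbb{F}_q^*$ is the set of nonzero elements of $\mathbb{F}_q$, endowed with an arbitrary fixed linear order; $(\mathbb{F}_q^* )^d$ is ordered lexicographically with respect to it. Let $C_d = \mathrm{DOT} \sqcup \mathrm{ZERO}\sqcup\mathrm{UP}\sqcup\mathrm{DOWN}$, where $\mathrm{DOT} = \mathbb{F}_q^*$ and ZERO, UP, DOWN are three disjoint copies of $\{1,\dots,d\}\times \mathbb{F}_q$. For distinct $x<y$ in $(\mathbb{F}_q^* )^d$, let $i$ be the first coordinate where $x$ and $y$ differ, and $x\cdot y$ the standard dot product; $\varphi_d(x,y)=\varphi_d(y,x)$ is $(i,x_i+y_i)$ in ZERO if $x\cdot y=0$; $(i,x_i+y_i)$ in UP if $x\cdot y\ne 0$ and $x\cdot y=x\cdot x$; $(i,x_i+y_i)$ in DOWN if $x\cdot y\notin\{0,x\cdot x\}$ and $x\cdot y=y\cdot y$; and $x\cdot y\in\mathrm{DOT}$ otherwise. For a vertex set $A$, $\varphi_d(A)$ is the set of colors on pairs inside $A$. $S$ has a leftover structure under $\varphi_d$ if $|S|=1$, or $S$ has a partition $S=A\cup B$ into nonempty sets such that $A$ and $B$ each have a leftover structure, $\varphi_d(A)\cap\varphi_d(B)=\emptyset$, and there is a color $\gamma$ with $\varphi_d(a,b)=\gamma$ for all $a\in A$, $b\in B$ and $\gamma\notin\varphi_d(A)\cup\varphi_d(B)$.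 *)

theory Defs
  imports Main
begin

text \<open>Colors of C_d. Coordinate indices are 0-based (0..d-1) instead of 1..d.\<close>
datatype 'a color = DOT 'a | ZERO nat 'a | UP nat 'a | DOWN nat 'a

text \<open>Vectors of (F_q^*)^d, represented as functions nat => 'a, nonzero on {0..<d},
  zero outside.\<close>
definition vecs :: "nat \<Rightarrow> (nat \<Rightarrow> 'a::zero) set" where
  "vecs d = {x. (\<forall>i<d. x i \<noteq> 0) \<and> (\<forall>i\<ge>d. x i = 0)}"

definition dotp :: "nat \<Rightarrow> (nat \<Rightarrow> 'a::comm_ring_1) \<Rightarrow> (nat \<Rightarrow> 'a) \<Rightarrow> 'a" where
  "dotp d x y = (\<Sum>i<d. x i * y i)"

definition first_diff :: "(nat \<Rightarrow> 'a) \<Rightarrow> (nat \<Rightarrow> 'a) \<Rightarrow> nat" where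
  "first_diff x y = (LEAST i. x i \<noteq> y i)"

definition lex_less :: "'a rel \<Rightarrow> (nat \<Rightarrow> 'a) \<Rightarrow> (nat \<Rightarrow> 'a) \<Rightarrow> bool" where
  "lex_less r x y = (x \<noteq> y \<and> (x (first_diff x y), y (first_diff x y)) \<in> r)"

definition phi_ord :: "nat \<Rightarrow> (nat \<Rightarrow> 'a::field) \<Rightarrow> (nat \<Rightarrow> 'a) \<Rightarrow> 'a color" where
  "phi_ord d x y = (let i = first_diff x y; s = x i + y i; p = dotp d x y in
     if p = 0 then ZERO i s
     else if p = dotp d x x then UP i s
     else if p = dotp d y y then DOWN i s
     else DOT p)"

definition phi :: "nat \<Rightarrow> 'a rel \<Rightarrow> (nat \<Rightarrow> 'a::field) \<Rightarrow> (nat \<Rightarrow> 'a) \<Rightarrow> 'a color" where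
  "phi d r x y = (if lex_less r x y then phi_ord d x y else phi_ord d y x)"

definition colors :: "('v \<Rightarrow> 'v \<Rightarrow> 'c) \<Rightarrow> 'v set \<Rightarrow> 'c set" where
  "colors c A = {c a b | a b. a \<in> A \<and> b \<in> A \<and> a \<noteq> b}"

inductive leftover :: "('v \<Rightarrow> 'v \<Rightarrow> 'c) \<Rightarrow> 'v set \<Rightarrow> bool" for c where
  single: "leftover c {v}"
| split: "\<lbrakk> A \<noteq> {}; B \<noteq> {}; A \<inter> B = {}; leftover c A; leftover c B;
            colors c A \<inter> colors c B = {};
            \<forall>a\<in>A. \<forall>b\<in>B. c a b = \<gamma>; \<gamma> \<notin> colors c A \<union> colors c B \<rbrakk>
          \<Longrightarrow> leftover c (A \<union> B)"

end

theory Submission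
  imports Defs "HOL-Library.Function_Algebras" "HOL.Vector_Spaces"
begin


definition sc :: "'a::field \<Rightarrow> (nat \<Rightarrow> 'a) \<Rightarrow> (nat \<Rightarrow> 'a)" where
  "sc c f = (\<lambda>i. c * f i)"

interpretation fv: vector_space "sc :: 'a::field \<Rightarrow> (nat \<Rightarrow> 'a) \<Rightarrow> (nat \<Rightarrow> 'a)"
  by unfold_locales (auto simp: sc_def fun_eq_iff algebra_simps)

lemma sc_apply: "sc c f i = c * f i"
  by (simp add: sc_def)

lemma sum_fun_apply: "(\<Sum>v\<in>S. (f v :: nat \<Rightarrow> 'a::field)) i = (\<Sum>v\<in>S. f v i)"
  by (induct S rule: infinite_finite_induct) auto

lemma fv_subspace_iff:
  "fv.subspace (S :: (nat \<Rightarrow> 'a::field) set) \<longleftrightarrow>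
     0 \<in> S \<and> (\<forall>x\<in>S. \<forall>y\<in>S. x + y \<in> S) \<and> (\<forall>c. \<forall>x\<in>S. sc c x \<in> S)"
  by (simp add: fv.subspace_def)

lemma span_lin0:
  fixes f :: "(nat \<Rightarrow> 'a::field) \<Rightarrow> 'a"
  assumes add: "\<And>u v. f (u + v) = f u + f v"
    and scl: "\<And>c u. f (sc c u) = c * f u"
    and z: "\<And>x. x \<in> X \<Longrightarrow> f x = 0"
    and x: "x \<in> fv.span X"
  shows "f x = 0"
proof -
  have "f 0 = f 0 + f 0" using add[of 0 0] by simp
  then have f0: "f 0 = 0" by (metis add_cancel_right_right)
  have "fv.subspace {u. f u = 0}"
    unfolding fv_subspace_iff using f0 add scl by auto
  then show ?thesis using fv.span_induct[OF x, of "\<lambda>u. f u = 0"] z by auto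
qed

lemma dotp_add1: "dotp n (u + v) w = dotp n u w + dotp n v w"
  by (simp add: dotp_def sum.distrib algebra_simps)
lemma dotp_add2: "dotp n w (u + v) = dotp n w u + dotp n w v"
  by (simp add: dotp_def sum.distrib algebra_simps)
lemma dotp_sc1: "dotp n (sc c u) w = c * dotp n u w"
  by (simp add: dotp_def sum_distrib_left algebra_simps sc_apply)
lemma dotp_sc2: "dotp n w (sc c u) = c * dotp n w u"
  by (simp add: dotp_def sum_distrib_left algebra_simps sc_apply)
lemma dotp_sym: "dotp n u w = dotp n w u"
  by (simp add: dotp_def mult.commute)
lemma dotp_diff1: "dotp n (u - v) w = dotp n u w - dotp n v w"
  by (simp add: dotp_def sum_subtractf algebra_simps)

lemma span_orth:
  assumes h: "\<And>x y. x \<in> X \<Longrightarrow> y \<in> Y \<Longrightarrow> dotp n x y = (0::'a::field)"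
    and x: "x \<in> fv.span X" and y: "y \<in> fv.span Y"
  shows "dotp n x y = 0"
proof -
  have h2: "dotp n x' y = 0" if x': "x' \<in> X" for x'
    by (rule span_lin0[where f="\<lambda>u. dotp n x' u", OF _ _ _ y])
       (simp_all add: dotp_add2 dotp_sc2 h[OF x'])
  show ?thesis
    by (rule span_lin0[where f="\<lambda>u. dotp n u y", OF _ _ _ x])
       (simp_all add: dotp_add1 dotp_sc1 h2)
qed

lemma span_supp:
  assumes h: "\<And>x i. x \<in> X \<Longrightarrow> i \<ge> n \<Longrightarrow> x i = (0::'a::field)"
    and x: "x \<in> fv.span X" and i: "i \<ge> n"
  shows "x i = 0"
  by (rule span_lin0[where f="\<lambda>u. u i", OF _ _ _ x]) (simp_all add: sc_apply h[OF _ i])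

lemma fv_module_hom:
  assumes "\<And>u v. g (u + v) = g u + g v" and "\<And>c u. g (sc c u) = sc c (g u)"
  shows "module_hom sc sc (g :: (nat \<Rightarrow> 'a::field) \<Rightarrow> (nat \<Rightarrow> 'a))"
  unfolding module_hom_def module_hom_axioms_def module_iff_vector_space
  using fv.vector_space_axioms assms by auto

lemma dotp_single:
  assumes "\<And>i. i < Suc n \<Longrightarrow> i \<noteq> n \<Longrightarrow> x i = 0"
  shows "dotp (Suc n) x y = x n * (y n :: 'a::field)"
  unfolding dotp_def using assms by (simp add: lessThan_Suc)

lemma dotp_Suc: "dotp (Suc n) x y = dotp n x y + x n * (y n :: 'a::field)"
  by (simp add: dotp_def)

lemma pivot:
  fixes U V :: "(nat \<Rightarrow> 'a::field) set"
  assumes IH: "\<And>(U::(nat \<Rightarrow> 'a) set) V. finite U \<Longrightarrow> finite V \<Longrightarrow> fv.independent U \<Longrightarrow> fv.independent V \<Longrightarrow>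
        (\<forall>u\<in>U. \<forall>i\<ge>n. u i = 0) \<Longrightarrow> (\<forall>v\<in>V. \<forall>i\<ge>n. v i = 0) \<Longrightarrow>
        (\<forall>u\<in>U. \<forall>v\<in>V. dotp n u v = 0) \<Longrightarrow> card U + card V \<le> n"
  and fU: "finite U" and fV: "finite V" and iU: "fv.independent U" and iV: "fv.independent V"
  and sU: "\<forall>u\<in>U. \<forall>i\<ge>Suc n. u i = 0" and sV: "\<forall>v\<in>V. \<forall>i\<ge>Suc n. v i = 0"
  and o: "\<forall>u\<in>U. \<forall>v\<in>V. dotp (Suc n) u v = 0"
  and v1: "v1 \<in> V" and nz: "v1 n \<noteq> 0"
  shows "card U + card V \<le> Suc n"
proof -
  define g where "g = (\<lambda>v::nat\<Rightarrow>'a. v - sc (v n / v1 n) v1)"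
  define p where "p = (\<lambda>(u::nat\<Rightarrow>'a) i. if i = n then 0 else u i)"
  have hg: "module_hom sc sc g"
    by (rule fv_module_hom) (auto simp: g_def fun_eq_iff add_divide_distrib algebra_simps sc_apply)
  have hp: "module_hom sc sc p"
    by (rule fv_module_hom) (auto simp: p_def fun_eq_iff sc_apply)
  have ortho_span: "dotp (Suc n) x y = 0" if "x \<in> fv.span U" "y \<in> fv.span V" for x y
    by (rule span_orth[OF _ that]) (use o in auto)
  have inj_p: "inj_on p (fv.span U)"
  proof (subst module_hom.inj_on_iff_eq_0[OF hp fv.subspace_span], intro ballI impI)
    fix x assume x: "x \<in> fv.span U" and px: "p x = 0"
    have xo: "x i = 0" if "i \<noteq> n" for i
    proof -
      have "p x i = 0" using px by simp
      then show ?thesis using that by (simp add: p_def)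
    qed
    have "dotp (Suc n) x v1 = x n * v1 n"
      by (rule dotp_single) (use xo in auto)
    moreover have "dotp (Suc n) x v1 = 0"
      using ortho_span[OF x fv.span_base[OF v1]] .
    ultimately have "x n = 0" using nz by simp
    then show "x = 0" unfolding fun_eq_iff zero_fun_def using xo by metis
  qed
  have inj_g: "inj_on g (fv.span (V - {v1}))"
  proof (subst module_hom.inj_on_iff_eq_0[OF hg fv.subspace_span], intro ballI impI)
    fix x assume x: "x \<in> fv.span (V - {v1})" and gx: "g x = 0"
    define c where "c = x n / v1 n"
    have xc: "x = sc c v1" using gx by (simp add: g_def c_def)
    show "x = 0"
    proof (cases "c = 0")
      case True then show ?thesis using xc by (simp add: sc_def fun_eq_iff)
    next
      case False
      have "sc (1/c) x = v1" using xc False by (simp add: sc_def fun_eq_iff)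
      moreover have "sc (1/c) x \<in> fv.span (V - {v1})" using x by (rule fv.span_scale)
      ultimately have "v1 \<in> fv.span (V - {v1})" by simp
      then have "fv.dependent V" using v1 fv.dependent_def by blast
      then show ?thesis using iV by blast
    qed
  qed
  define U' where "U' = p ` U"
  define V' where "V' = g ` (V - {v1})"
  have iU': "fv.independent U'"
    unfolding U'_def by (rule module_hom.independent_injective_image[OF hp iU inj_p])
  have iV1: "fv.independent (V - {v1})" using iV by (rule fv.independent_mono) auto
  have iV': "fv.independent V'"
    unfolding V'_def by (rule module_hom.independent_injective_image[OF hg iV1 inj_g])
  have cU: "card U' = card U"
    unfolding U'_def by (rule card_image, rule inj_on_subset[OF inj_p fv.span_superset])
  have "inj_on g (V - {v1})" by (rule inj_on_subset[OF inj_g fv.span_superset])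
  then have cV: "card V' = card V - 1"
    using v1 fV by (simp add: V'_def card_image card_Diff_singleton)
  have sU': "\<forall>u\<in>U'. \<forall>i\<ge>n. u i = 0"
    using sU by (auto simp: U'_def p_def)
  have sV': "\<forall>v\<in>V'. \<forall>i\<ge>n. v i = 0"
  proof (intro ballI allI impI)
    fix v i assume "v \<in> V'" "n \<le> i"
    then obtain w where w: "w \<in> V" and vw: "v = g w" by (auto simp: V'_def)
    show "v i = 0"
    proof (cases "i = n")
      case True then show ?thesis using nz by (simp add: vw g_def sc_apply)
    next
      case False then have "i \<ge> Suc n" using \<open>n \<le> i\<close> by simp
      then have "w i = 0" "v1 i = 0" using sV w v1 by auto
      then show ?thesis by (simp add: vw g_def sc_apply)
    qed
  qed
  have oU'V': "\<forall>u\<in>U'. \<forall>v\<in>V'. dotp n u v = 0"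
  proof (intro ballI)
    fix u' v' assume "u' \<in> U'" "v' \<in> V'"
    then obtain u w where u: "u \<in> U" and w: "w \<in> V" and uu: "u' = p u" and vv: "v' = g w"
      by (auto simp: U'_def V'_def)
    have gwn: "g w n = 0" using nz by (simp add: g_def sc_apply)
    have "dotp n u' v' = dotp n u (g w)"
      unfolding dotp_def uu vv p_def by (rule sum.cong) auto
    also have "\<dots> = dotp (Suc n) u (g w)"
      by (simp add: dotp_Suc gwn)
    also have "\<dots> = dotp (Suc n) u w - (w n / v1 n) * dotp (Suc n) u v1"
      by (simp add: g_def dotp_sym[of _ u] dotp_diff1 dotp_sc1)
    also have "\<dots> = 0" using o u w v1 by simp
    finally show "dotp n u' v' = 0" .
  qed
  have fU': "finite U'" "finite V'" by (auto simp: U'_def V'_def fU fV)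
  have "card U' + card V' \<le> n"
    by (rule IH[OF fU'(1) fU'(2) iU' iV' sU' sV' oU'V'])
  moreover have "card V \<ge> 1" using v1 fV by (auto simp: Suc_le_eq card_gt_0_iff)
  ultimately show ?thesis using cU cV by simp
qed

lemma orth:
  fixes U V :: "(nat \<Rightarrow> 'a::field) set"
  shows "finite U \<Longrightarrow> finite V \<Longrightarrow> fv.independent U \<Longrightarrow> fv.independent V \<Longrightarrow>
        (\<forall>u\<in>U. \<forall>i\<ge>n. u i = 0) \<Longrightarrow> (\<forall>v\<in>V. \<forall>i\<ge>n. v i = 0) \<Longrightarrow>
        (\<forall>u\<in>U. \<forall>v\<in>V. dotp n u v = 0) \<Longrightarrow> card U + card V \<le> n"
proof (induction n arbitrary: U V)
  case 0
  have "U = {}"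
  proof (rule ccontr)
    assume "U \<noteq> {}" then obtain u where "u \<in> U" by auto
    with 0 have "u = 0" by (auto simp: fun_eq_iff)
    with \<open>u \<in> U\<close> have "fv.dependent U" using fv.dependent_zero by auto
    then show False using 0 by blast
  qed
  moreover have "V = {}"
  proof (rule ccontr)
    assume "V \<noteq> {}" then obtain u where "u \<in> V" by auto
    with 0 have "u = 0" by (auto simp: fun_eq_iff)
    with \<open>u \<in> V\<close> have "fv.dependent V" using fv.dependent_zero by auto
    then show False using 0 by blast
  qed
  ultimately show ?case by simp
next
  case (Suc n)
  show ?case
  proof (cases "\<exists>v\<in>V. v n \<noteq> 0")
    case True
    then obtain v1 where "v1 \<in> V" "v1 n \<noteq> 0" by auto
    show ?thesis by (rule pivot[OF Suc.IH Suc.prems \<open>v1 \<in> V\<close> \<open>v1 n \<noteq> 0\<close>]) auto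
  next
    case False
    show ?thesis
    proof (cases "\<exists>u\<in>U. u n \<noteq> 0")
      case True
      then obtain u1 where "u1 \<in> U" "u1 n \<noteq> 0" by auto
      have o': "\<forall>u\<in>V. \<forall>v\<in>U. dotp (Suc n) u v = 0" using Suc.prems(7) dotp_sym by metis
      have "card V + card U \<le> Suc n"
        by (rule pivot[OF Suc.IH Suc.prems(2,1,4,3,6,5) o' \<open>u1 \<in> U\<close> \<open>u1 n \<noteq> 0\<close>]) auto
      then show ?thesis by simp
    next
      case False2: False
      have sU: "\<forall>u\<in>U. \<forall>i\<ge>n. u i = 0"
        using Suc.prems(5) False2 by (metis le_eq_less_or_eq Suc_le_eq)
      have sV: "\<forall>u\<in>V. \<forall>i\<ge>n. u i = 0"
        using Suc.prems(6) False by (metis le_eq_less_or_eq Suc_le_eq)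
      have o: "\<forall>u\<in>U. \<forall>v\<in>V. dotp n u v = 0"
      proof (intro ballI)
        fix u v assume uv: "u \<in> U" "v \<in> V"
        have "u n = 0" using False2 uv by auto
        moreover have "dotp (Suc n) u v = 0" using Suc.prems(7) uv by blast
        ultimately show "dotp n u v = 0" by (simp add: dotp_Suc)
      qed
      have "card U + card V \<le> n" by (rule Suc.IH[OF Suc.prems(1-4) sU sV o])
      then show ?thesis by simp
    qed
  qed
qed



definition dset :: "(nat \<Rightarrow> 'a::field) set \<Rightarrow> (nat \<Rightarrow> 'a) set" where
  "dset T = {x - y | x y. x \<in> T \<and> y \<in> T}"

definition LL :: "(nat \<Rightarrow> 'a::field) set \<Rightarrow> (nat \<Rightarrow> 'a) set" where
  "LL T = fv.span (dset T)"

lemma fd_ne: "x \<noteq> y \<Longrightarrow> x (first_diff x y) \<noteq> y (first_diff x y)"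
  unfolding first_diff_def by (rule LeastI_ex) (auto simp: fun_eq_iff)

lemma fd_less: "j < first_diff x y \<Longrightarrow> x j = y j"
  unfolding first_diff_def using not_less_Least by blast

lemma fd_sym: "first_diff x y = first_diff y x"
  unfolding first_diff_def by (rule arg_cong[where f=Least]) (auto simp: fun_eq_iff)

lemma vecs_nz: "x \<in> vecs d \<Longrightarrow> i < d \<Longrightarrow> x i \<noteq> 0"
  by (simp add: vecs_def)

lemma vecs_z: "x \<in> vecs d \<Longrightarrow> d \<le> i \<Longrightarrow> x i = 0"
  by (simp add: vecs_def)

lemma fd_lt: assumes "x \<in> vecs d" "y \<in> vecs d" "x \<noteq> y" shows "first_diff x y < d"
proof -
  obtain j where j: "x j \<noteq> y j" using assms(3) by (auto simp: fun_eq_iff)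
  have "j < d" using j assms(1,2) vecs_z by (metis not_le)
  moreover have "first_diff x y \<le> j" unfolding first_diff_def using j by (rule Least_le)
  ultimately show ?thesis by simp
qed

lemma phi_cases: "phi d r a b = phi_ord d a b \<or> phi d r a b = phi_ord d b a"
  by (simp add: phi_def)

lemma po_ZERO: "phi_ord d x y = ZERO i s \<Longrightarrow> dotp d x y = 0 \<and> i = first_diff x y \<and> s = x i + y i"
  by (auto simp: phi_ord_def Let_def split: if_splits)
lemma po_UP: "phi_ord d x y = UP i s \<Longrightarrow> dotp d x y = dotp d x x \<and> i = first_diff x y \<and> s = x i + y i"
  by (auto simp: phi_ord_def Let_def split: if_splits)
lemma po_DOWN: "phi_ord d x y = DOWN i s \<Longrightarrow> dotp d x y = dotp d y y \<and> i = first_diff x y \<and> s = x i + y i"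
  by (auto simp: phi_ord_def Let_def split: if_splits)
lemma po_DOT: "phi_ord d x y = DOT p \<Longrightarrow> p = dotp d x y \<and> p \<noteq> 0 \<and> p \<noteq> dotp d x x \<and> p \<noteq> dotp d y y"
  by (auto simp: phi_ord_def Let_def split: if_splits)

lemma LL_lin0:
  fixes f :: "(nat \<Rightarrow> 'a::field) \<Rightarrow> 'a"
  assumes "\<And>u v. f (u + v) = f u + f v" "\<And>c u. f (sc c u) = c * f u"
    and "\<And>a a'. a \<in> A \<Longrightarrow> a' \<in> A \<Longrightarrow> f (a - a') = 0"
    and "u \<in> LL A"
  shows "f u = 0"
  using assms(4) unfolding LL_def
  by (rule span_lin0[OF assms(1,2), rotated]) (use assms(3) in \<open>auto simp: dset_def\<close>)

lemma LL_coord: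
  assumes "\<forall>a\<in>A. \<forall>a'\<in>A. a i = a' i" "u \<in> LL A"
  shows "u i = (0::'a::field)"
  by (rule LL_lin0[where f="\<lambda>u. u i"]) (use assms in \<open>auto simp: sc_apply\<close>)

lemma LL_dot:
  assumes "\<forall>a\<in>A. \<forall>a'\<in>A. dotp n (a - a') w = 0" "u \<in> LL A"
  shows "dotp n u w = (0::'a::field)"
  by (rule LL_lin0[where f="\<lambda>u. dotp n u w"]) (use assms in \<open>auto simp: dotp_add1 dotp_sc1\<close>)

lemma LL_sub_span: "LL A \<subseteq> fv.span A"
  unfolding LL_def
  by (rule fv.span_minimal[OF _ fv.subspace_span]) (auto simp: dset_def intro: fv.span_diff fv.span_base)

lemma LL_subspace: "fv.subspace (LL A)"
  unfolding LL_def by (rule fv.subspace_span)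

lemma LL_mono: "A \<subseteq> B \<Longrightarrow> LL A \<subseteq> LL B"
  unfolding LL_def dset_def by (rule fv.span_mono) auto

lemma diff_in_LL: "a \<in> A \<Longrightarrow> b \<in> A \<Longrightarrow> a - b \<in> LL A"
  unfolding LL_def dset_def by (rule fv.span_base) auto

lemma dset_supp:
  assumes "Y \<subseteq> vecs d" "x \<in> dset Y" "d \<le> i"
  shows "x i = 0"
proof -
  obtain a b where "x = a - b" "a \<in> Y" "b \<in> Y" using assms(2) by (auto simp: dset_def)
  moreover have "a i = 0" "b i = 0" using calculation(2,3) assms(1,3) vecs_z by blast+
  ultimately show ?thesis by simp
qed

lemma orthside:
  fixes X Y :: "(nat \<Rightarrow> 'a::field) set"
  assumes X: "X \<subseteq> vecs 4" and Y: "Y \<subseteq> vecs 4" and x0: "x0 \<in> X" "x0 \<notin> LL X"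
    and o: "\<forall>y\<in>Y. \<forall>y'\<in>Y. \<forall>x\<in>X. dotp 4 (y - y') x = 0"
    and I: "I \<subseteq> LL Y" "finite I" "fv.independent I"
    and J: "J \<subseteq> LL X" "finite J" "fv.independent J"
  shows "card I + card J \<le> 3"
proof -
  have sJ: "fv.span J \<subseteq> LL X" by (rule fv.span_minimal[OF J(1) LL_subspace])
  have x0J: "x0 \<notin> fv.span J" using sJ x0 by auto
  have iJ': "fv.independent (insert x0 J)" by (rule fv.independent_insertI[OF x0J J(3)])
  have x0J': "x0 \<notin> J" using x0J fv.span_base by blast
  have cJ': "card (insert x0 J) = card J + 1" using x0J' J(2) by simp
  have J'span: "insert x0 J \<subseteq> fv.span X"
    using J(1) LL_sub_span x0(1) fv.span_base by blast
  have supX: "\<forall>v\<in>fv.span X. \<forall>i\<ge>4. v i = 0"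
    using X by (auto intro: span_supp[of X 4] vecs_z)
  have supY: "\<forall>v\<in>LL Y. \<forall>i\<ge>4. v i = 0"
  proof (intro ballI allI impI)
    fix v i assume "v \<in> LL Y" "4 \<le> (i::nat)"
    then show "v i = 0" unfolding LL_def
      by (rule span_supp[rotated]) (use Y in \<open>auto intro: dset_supp\<close>)
  qed
  have oo: "\<forall>u\<in>I. \<forall>v\<in>insert x0 J. dotp 4 u v = 0"
  proof (intro ballI)
    fix u v assume u: "u \<in> I" and v: "v \<in> insert x0 J"
    have "u \<in> fv.span (dset Y)" using u I(1) by (auto simp: LL_def)
    moreover have "v \<in> fv.span X" using v J'span by auto
    ultimately show "dotp 4 u v = 0"
      by (rule span_orth[rotated]) (use o in \<open>auto simp: dset_def\<close>)
  qed
  have "card I + card (insert x0 J) \<le> 4"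
    by (rule orth) (use I J iJ' supX supY J'span oo in auto)
  then show ?thesis using cJ' by simp
qed

lemma K2_XB:
  assumes "A \<subseteq> vecs 4" "B \<subseteq> vecs 4" "b0 \<in> B" "b0 \<notin> LL B"
    "\<forall>a\<in>A. \<forall>a'\<in>A. \<forall>b\<in>B. dotp 4 (a - a') b = (0::'a::field)"
  shows "\<forall>I J. I \<subseteq> LL A \<longrightarrow> J \<subseteq> LL B \<longrightarrow> finite I \<longrightarrow> finite J \<longrightarrow>
           fv.independent I \<longrightarrow> fv.independent J \<longrightarrow> card I + card J \<le> 3"
  using orthside[OF assms(2,1,3,4,5)] by blast

lemma K2_XA:
  assumes "A \<subseteq> vecs 4" "B \<subseteq> vecs 4" "a0 \<in> A" "a0 \<notin> LL A"
    "\<forall>b\<in>B. \<forall>b'\<in>B. \<forall>a\<in>A. dotp 4 (b - b') a = (0::'a::field)"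
  shows "\<forall>I J. I \<subseteq> LL A \<longrightarrow> J \<subseteq> LL B \<longrightarrow> finite I \<longrightarrow> finite J \<longrightarrow>
           fv.independent I \<longrightarrow> fv.independent J \<longrightarrow> card I + card J \<le> 3"
proof (intro allI impI)
  fix I J assume *: "I \<subseteq> LL A" "J \<subseteq> LL B" "finite I" "finite J" "fv.independent I" "fv.independent J"
  have "card J + card I \<le> 3" by (rule orthside[OF assms(1,2,3,4,5)]) (use * in auto)
  then show "card I + card J \<le> 3" by simp
qed

lemma coord_setup:
  fixes A B :: "(nat \<Rightarrow> 'a::field) set"
  assumes V: "A \<union> B \<subseteq> vecs 4" and dj: "A \<inter> B = {}" and a0: "a0 \<in> A" and b0: "b0 \<in> B"
    and h: "\<forall>a\<in>A. \<forall>b\<in>B. first_diff a b = i \<and> a i + b i = s"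
  shows "i < 4" "\<forall>a\<in>A. a i = a0 i" "\<forall>b\<in>B. b i = b0 i"
    "\<forall>a\<in>A. \<forall>b\<in>B. a - b \<notin> LL A \<and> a - b \<notin> LL B" "a0 \<notin> LL A" "b0 \<notin> LL B"
proof -
  have ne: "a0 \<noteq> b0" using dj a0 b0 by blast
  show i4: "i < 4" using h a0 b0 fd_lt[of a0 4 b0] V ne by auto
  show cA: "\<forall>a\<in>A. a i = a0 i"
  proof
    fix a assume "a \<in> A"
    then have "a i + b0 i = s" "a0 i + b0 i = s" using h a0 b0 by auto
    then show "a i = a0 i" by (metis add_right_cancel)
  qed
  show cB: "\<forall>b\<in>B. b i = b0 i"
  proof
    fix b assume "b \<in> B"
    then have "a0 i + b i = s" "a0 i + b0 i = s" using h a0 b0 by auto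
    then show "b i = b0 i" by (metis add_left_cancel)
  qed
  have cA': "\<forall>a\<in>A. \<forall>a'\<in>A. a i = a' i" using cA by metis
  have cB': "\<forall>b\<in>B. \<forall>b'\<in>B. b i = b' i" using cB by metis
  show "\<forall>a\<in>A. \<forall>b\<in>B. a - b \<notin> LL A \<and> a - b \<notin> LL B"
  proof (intro ballI conjI notI)
    fix a b assume a: "a \<in> A" and b: "b \<in> B"
    have "a \<noteq> b" using dj a b by blast
    then have "a i \<noteq> b i" using fd_ne[of a b] h a b by auto
    then have nz: "(a - b) i \<noteq> 0" by simp
    { assume "a - b \<in> LL A" then show False using LL_coord[OF cA'] nz by blast }
    { assume "a - b \<in> LL B" then show False using LL_coord[OF cB'] nz by blast }
  qed
  show "a0 \<notin> LL A"
  proof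
    assume "a0 \<in> LL A"
    then have "a0 i = 0" using LL_coord[OF cA'] by blast
    moreover have "a0 i \<noteq> 0" using vecs_nz[of a0 4 i] V a0 i4 by auto
    ultimately show False by simp
  qed
  show "b0 \<notin> LL B"
  proof
    assume "b0 \<in> LL B"
    then have "b0 i = 0" using LL_coord[OF cB'] by blast
    moreover have "b0 i \<noteq> 0" using vecs_nz[of b0 4 i] V b0 i4 by auto
    ultimately show False by simp
  qed
qed

lemma orient:
  assumes dj: "A \<inter> B = {}" and a0: "a0 \<in> A" and b0: "b0 \<in> B"
    and h: "\<forall>a\<in>A. \<forall>b\<in>B. first_diff a b = i"
    and cA: "\<forall>a\<in>A. a i = a0 i" and cB: "\<forall>b\<in>B. b i = b0 i"
  shows "\<forall>a\<in>A. \<forall>b\<in>B. phi d r a b = (if lex_less r a0 b0 then phi_ord d a b else phi_ord d b a)"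
proof (intro ballI)
  fix a b assume a: "a \<in> A" and b: "b \<in> B"
  have "a \<noteq> b" "a0 \<noteq> b0" using dj a b a0 b0 by blast+
  then have "lex_less r a b = lex_less r a0 b0"
    using h a b a0 b0 cA cB by (simp add: lex_less_def)
  then show "phi d r a b = (if lex_less r a0 b0 then phi_ord d a b else phi_ord d b a)"
    by (simp add: phi_def)
qed

lemma node:
  fixes A B :: "(nat \<Rightarrow> 'a::field) set"
  assumes ne: "A \<noteq> {}" "B \<noteq> {}" and dj: "A \<inter> B = {}" and V: "A \<union> B \<subseteq> vecs 4"
    and mono: "\<forall>a\<in>A. \<forall>b\<in>B. phi 4 r a b = \<gamma>"
  shows "(\<forall>a\<in>A. \<forall>b\<in>B. a - b \<notin> LL A \<and> a - b \<notin> LL B) \<and>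
    (\<forall>I J. I \<subseteq> LL A \<longrightarrow> J \<subseteq> LL B \<longrightarrow> finite I \<longrightarrow> finite J \<longrightarrow>
           fv.independent I \<longrightarrow> fv.independent J \<longrightarrow> card I + card J \<le> 3)"
proof -
  obtain a0 b0 where a0: "a0 \<in> A" and b0: "b0 \<in> B" using ne by blast
  have VA: "A \<subseteq> vecs 4" and VB: "B \<subseteq> vecs 4" using V by auto
  have pc: "phi_ord 4 a b = \<gamma> \<or> phi_ord 4 b a = \<gamma>" if "a \<in> A" "b \<in> B" for a b
    using mono that phi_cases by metis
  show ?thesis
  proof (cases \<gamma>)
    case (DOT p)
    have dp: "dotp 4 a b = p \<and> p \<noteq> 0 \<and> p \<noteq> dotp 4 a a \<and> p \<noteq> dotp 4 b b"
      if "a \<in> A" "b \<in> B" for a b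
    proof -
      have "phi_ord 4 a b = DOT p \<or> phi_ord 4 b a = DOT p" using pc[OF that] DOT by simp
      then show ?thesis
      proof
        assume "phi_ord 4 a b = DOT p" from po_DOT[OF this] show ?thesis by auto
      next
        assume "phi_ord 4 b a = DOT p" from po_DOT[OF this] show ?thesis using dotp_sym[of 4 a b] by auto
      qed
    qed
    have oA: "\<forall>a\<in>A. \<forall>a'\<in>A. \<forall>b\<in>B. dotp 4 (a - a') b = 0"
    proof (intro ballI)
      fix a a' b assume "a \<in> A" "a' \<in> A" "b \<in> B"
      then have "dotp 4 a b = p" "dotp 4 a' b = p" using dp by auto
      then show "dotp 4 (a - a') b = 0" by (simp add: dotp_diff1)
    qed
    have oB: "\<forall>b\<in>B. \<forall>b'\<in>B. \<forall>a\<in>A. dotp 4 (b - b') a = 0"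
    proof (intro ballI)
      fix b b' a assume "b \<in> B" "b' \<in> B" "a \<in> A"
      then have "dotp 4 b a = p" "dotp 4 b' a = p" using dp dotp_sym[of 4 b a] dotp_sym[of 4 b' a] by auto
      then show "dotp 4 (b - b') a = 0" by (simp add: dotp_diff1)
    qed
    have K1: "\<forall>a\<in>A. \<forall>b\<in>B. a - b \<notin> LL A \<and> a - b \<notin> LL B"
    proof (intro ballI conjI notI)
      fix a b assume a: "a \<in> A" and b: "b \<in> B"
      { assume "a - b \<in> LL A"
        then have "dotp 4 (a - b) b = 0" using LL_dot[of A 4 b] oA b by blast
        then show False using dp[OF a b] by (simp add: dotp_diff1) }
      { assume "a - b \<in> LL B"
        then have "dotp 4 (a - b) a = 0" using LL_dot[of B 4 a] oB a by blast
        then show False using dp[OF a b] by (simp add: dotp_diff1 dotp_sym[of 4 b a]) }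
    qed
    have "b0 \<notin> LL B"
    proof
      assume "b0 \<in> LL B"
      then have "dotp 4 b0 a0 = 0" using LL_dot[of B 4 a0] oB a0 by blast
      then show False using dp[OF a0 b0] by (simp add: dotp_sym[of 4 b0 a0])
    qed
    then show ?thesis by (rule conjI[OF K1 K2_XB[OF VA VB b0 _ oA]])
  next
    case (ZERO i s)
    have h: "dotp 4 a b = 0 \<and> first_diff a b = i \<and> a i + b i = s" if "a \<in> A" "b \<in> B" for a b
    proof -
      have "phi_ord 4 a b = ZERO i s \<or> phi_ord 4 b a = ZERO i s" using pc[OF that] ZERO by simp
      then show ?thesis
      proof
        assume "phi_ord 4 a b = ZERO i s" from po_ZERO[OF this] show ?thesis by auto
      next
        assume "phi_ord 4 b a = ZERO i s" from po_ZERO[OF this] show ?thesis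
          using dotp_sym[of 4 a b] fd_sym[of a b] add.commute[of "a i" "b i"] by auto
      qed
    qed
    have hh: "\<forall>a\<in>A. \<forall>b\<in>B. first_diff a b = i \<and> a i + b i = s" using h by blast
    note cs = coord_setup[OF V dj a0 b0 hh]
    have oA: "\<forall>a\<in>A. \<forall>a'\<in>A. \<forall>b\<in>B. dotp 4 (a - a') b = 0"
    proof (intro ballI)
      fix a a' b assume "a \<in> A" "a' \<in> A" "b \<in> B"
      then have "dotp 4 a b = 0" "dotp 4 a' b = 0" using h by auto
      then show "dotp 4 (a - a') b = 0" by (simp add: dotp_diff1)
    qed
    show ?thesis by (rule conjI[OF cs(4) K2_XB[OF VA VB b0 cs(6) oA]])
  next
    case (UP i s)
    have h: "first_diff a b = i \<and> a i + b i = s" if "a \<in> A" "b \<in> B" for a b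
    proof -
      have "phi_ord 4 a b = UP i s \<or> phi_ord 4 b a = UP i s" using pc[OF that] UP by simp
      then show ?thesis
      proof
        assume "phi_ord 4 a b = UP i s" from po_UP[OF this] show ?thesis by auto
      next
        assume "phi_ord 4 b a = UP i s" from po_UP[OF this] show ?thesis
          using dotp_sym[of 4 a b] fd_sym[of a b] add.commute[of "a i" "b i"] by auto
      qed
    qed
    have hh: "\<forall>a\<in>A. \<forall>b\<in>B. first_diff a b = i \<and> a i + b i = s" using h by blast
    note cs = coord_setup[OF V dj a0 b0 hh]
    note cA = cs(2) and cB = cs(3) and K1 = cs(4) and nA = cs(5) and nB = cs(6)
    have orr: "\<forall>a\<in>A. \<forall>b\<in>B. phi 4 r a b = (if lex_less r a0 b0 then phi_ord 4 a b else phi_ord 4 b a)"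
      by (rule orient[OF dj a0 b0 _ cA cB]) (use hh in blast)
    show ?thesis
    proof (cases "lex_less r a0 b0")
      case True
      have d: "dotp 4 a b = dotp 4 a a" if "a \<in> A" "b \<in> B" for a b
      proof -
        have "phi 4 r a b = \<gamma>" using mono that by blast
        moreover have "phi 4 r a b = (if lex_less r a0 b0 then phi_ord 4 a b else phi_ord 4 b a)"
          using orr that by blast
        ultimately have "phi_ord 4 a b = UP i s" using True UP by simp
        from po_UP[OF this] show ?thesis by simp
      qed
      have oB: "\<forall>b\<in>B. \<forall>b'\<in>B. \<forall>a\<in>A. dotp 4 (b - b') a = 0"
      proof (intro ballI)
        fix b b' a assume "b \<in> B" "b' \<in> B" "a \<in> A"
        then have "dotp 4 b a = dotp 4 a a" "dotp 4 b' a = dotp 4 a a"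
          using d dotp_sym[of 4 b a] dotp_sym[of 4 b' a] by auto
        then show "dotp 4 (b - b') a = 0" by (simp add: dotp_diff1)
      qed
      show ?thesis by (rule conjI[OF K1 K2_XA[OF VA VB a0 nA oB]])
    next
      case False
      have d: "dotp 4 b a = dotp 4 b b" if "a \<in> A" "b \<in> B" for a b
      proof -
        have "phi 4 r a b = \<gamma>" using mono that by blast
        moreover have "phi 4 r a b = (if lex_less r a0 b0 then phi_ord 4 a b else phi_ord 4 b a)"
          using orr that by blast
        ultimately have "phi_ord 4 b a = UP i s" using False UP by simp
        from po_UP[OF this] show ?thesis by simp
      qed
      have oA: "\<forall>a\<in>A. \<forall>a'\<in>A. \<forall>b\<in>B. dotp 4 (a - a') b = 0"
      proof (intro ballI)
        fix a a' b assume "a \<in> A" "a' \<in> A" "b \<in> B"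
        then have "dotp 4 a b = dotp 4 b b" "dotp 4 a' b = dotp 4 b b"
          using d dotp_sym[of 4 a b] dotp_sym[of 4 a' b] by auto
        then show "dotp 4 (a - a') b = 0" by (simp add: dotp_diff1)
      qed
      show ?thesis by (rule conjI[OF K1 K2_XB[OF VA VB b0 nB oA]])
    qed
  next
    case (DOWN i s)
    have h: "first_diff a b = i \<and> a i + b i = s" if "a \<in> A" "b \<in> B" for a b
    proof -
      have "phi_ord 4 a b = DOWN i s \<or> phi_ord 4 b a = DOWN i s" using pc[OF that] DOWN by simp
      then show ?thesis
      proof
        assume "phi_ord 4 a b = DOWN i s" from po_DOWN[OF this] show ?thesis by auto
      next
        assume "phi_ord 4 b a = DOWN i s" from po_DOWN[OF this] show ?thesis
          using dotp_sym[of 4 a b] fd_sym[of a b] add.commute[of "a i" "b i"] by auto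
      qed
    qed
    have hh: "\<forall>a\<in>A. \<forall>b\<in>B. first_diff a b = i \<and> a i + b i = s" using h by blast
    note cs = coord_setup[OF V dj a0 b0 hh]
    note cA = cs(2) and cB = cs(3) and K1 = cs(4) and nA = cs(5) and nB = cs(6)
    have orr: "\<forall>a\<in>A. \<forall>b\<in>B. phi 4 r a b = (if lex_less r a0 b0 then phi_ord 4 a b else phi_ord 4 b a)"
      by (rule orient[OF dj a0 b0 _ cA cB]) (use hh in blast)
    show ?thesis
    proof (cases "lex_less r a0 b0")
      case True
      have d: "dotp 4 a b = dotp 4 b b" if "a \<in> A" "b \<in> B" for a b
      proof -
        have "phi 4 r a b = \<gamma>" using mono that by blast
        moreover have "phi 4 r a b = (if lex_less r a0 b0 then phi_ord 4 a b else phi_ord 4 b a)"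
          using orr that by blast
        ultimately have "phi_ord 4 a b = DOWN i s" using True DOWN by simp
        from po_DOWN[OF this] show ?thesis by simp
      qed
      have oA: "\<forall>a\<in>A. \<forall>a'\<in>A. \<forall>b\<in>B. dotp 4 (a - a') b = 0"
      proof (intro ballI)
        fix a a' b assume "a \<in> A" "a' \<in> A" "b \<in> B"
        then have "dotp 4 a b = dotp 4 b b" "dotp 4 a' b = dotp 4 b b" using d by auto
        then show "dotp 4 (a - a') b = 0" by (simp add: dotp_diff1)
      qed
      show ?thesis by (rule conjI[OF K1 K2_XB[OF VA VB b0 nB oA]])
    next
      case False
      have d: "dotp 4 b a = dotp 4 a a" if "a \<in> A" "b \<in> B" for a b
      proof -
        have "phi 4 r a b = \<gamma>" using mono that by blast
        moreover have "phi 4 r a b = (if lex_less r a0 b0 then phi_ord 4 a b else phi_ord 4 b a)"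
          using orr that by blast
        ultimately have "phi_ord 4 b a = DOWN i s" using False DOWN by simp
        from po_DOWN[OF this] show ?thesis by simp
      qed
      have oB: "\<forall>b\<in>B. \<forall>b'\<in>B. \<forall>a\<in>A. dotp 4 (b - b') a = 0"
      proof (intro ballI)
        fix b b' a assume "b \<in> B" "b' \<in> B" "a \<in> A"
        then have "dotp 4 b a = dotp 4 a a" "dotp 4 b' a = dotp 4 a a" using d by auto
        then show "dotp 4 (b - b') a = 0" by (simp add: dotp_diff1)
      qed
      show ?thesis by (rule conjI[OF K1 K2_XA[OF VA VB a0 nA oB]])
    qed
  qed
qed

lemma ext_step:
  fixes X Y :: "(nat \<Rightarrow> 'a::field) set"
  assumes cX: "card X \<le> max 1 (2 * card IX)" and cY: "card Y \<le> 2" "1 \<le> card Y" "card Y \<le> card X"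
    and IX: "IX \<subseteq> LL X" "finite IX" "fv.independent IX"
    and d: "d \<notin> LL X" "d \<in> W" and sub: "LL X \<subseteq> W"
  shows "\<exists>I. I \<subseteq> W \<and> finite I \<and> fv.independent I \<and> card X + card Y \<le> max 1 (2 * card I)"
proof -
  have sI: "fv.span IX \<subseteq> LL X" by (rule fv.span_minimal[OF IX(1) LL_subspace])
  have dI: "d \<notin> fv.span IX" using sI d(1) by auto
  have ind: "fv.independent (insert d IX)" by (rule fv.independent_insertI[OF dI IX(3)])
  have dIX: "d \<notin> IX" using dI fv.span_base by blast
  have cI: "card (insert d IX) = card IX + 1" using dIX IX(2) by simp
  have "card X + card Y \<le> max 1 (2 * (card IX + 1))"
    using cX cY by (auto simp: max_def split: if_splits)
  then have "card X + card Y \<le> max 1 (2 * card (insert d IX))" using cI by simp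
  moreover have "insert d IX \<subseteq> W" using IX(1) sub d(2) by auto
  ultimately show ?thesis using ind IX(2) by blast
qed

lemma inv:
  fixes T :: "(nat \<Rightarrow> 'a::field) set"
  assumes "leftover (phi 4 r) T" "T \<subseteq> vecs 4"
  shows "finite T \<and> T \<noteq> {} \<and>
    (\<exists>I. I \<subseteq> LL T \<and> finite I \<and> fv.independent I \<and> card T \<le> max 1 (2 * card I))"
  using assms
proof (induction rule: leftover.induct)
  case (single v)
  show ?case using fv.independent_empty by (intro conjI exI[of _ "{}"]) auto
next
  case (split A B \<gamma>)
  have VA: "A \<subseteq> vecs 4" and VB: "B \<subseteq> vecs 4" using split.prems by auto
  have neA: "A \<noteq> {}" by fact
  have neB: "B \<noteq> {}" by fact
  have dj: "A \<inter> B = {}" by fact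
  have mono: "\<forall>a\<in>A. \<forall>b\<in>B. phi 4 r a b = \<gamma>" by fact
  obtain IA where fA: "finite A" and IA: "IA \<subseteq> LL A" "finite IA" "fv.independent IA"
    and cA: "card A \<le> max 1 (2 * card IA)"
    using split.IH(1)[OF VA] by blast
  obtain IB where fB: "finite B" and IB: "IB \<subseteq> LL B" "finite IB" "fv.independent IB"
    and cB: "card B \<le> max 1 (2 * card IB)"
    using split.IH(2)[OF VB] by blast
  note nd = node[OF neA neB dj split.prems mono]
  have K1: "\<forall>a\<in>A. \<forall>b\<in>B. a - b \<notin> LL A \<and> a - b \<notin> LL B" using nd by blast
  have K2: "card IA + card IB \<le> 3" using nd IA IB by blast
  obtain a0 b0 where a0: "a0 \<in> A" and b0: "b0 \<in> B" using neA neB by blast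
  have dA: "a0 - b0 \<notin> LL A" and dB: "a0 - b0 \<notin> LL B" using K1 a0 b0 by blast+
  have dW: "a0 - b0 \<in> LL (A \<union> B)" using a0 b0 by (intro diff_in_LL) auto
  have subA: "LL A \<subseteq> LL (A \<union> B)" and subB: "LL B \<subseteq> LL (A \<union> B)" by (auto intro: LL_mono[THEN subsetD])
  have cU: "card (A \<union> B) = card A + card B" using fA fB dj by (rule card_Un_disjoint)
  have c1A: "1 \<le> card A" and c1B: "1 \<le> card B" using fA fB neA neB by (auto simp: Suc_le_eq card_gt_0_iff)
  have nb: "\<not> (3 \<le> card A \<and> 3 \<le> card B)"
  proof
    assume "3 \<le> card A \<and> 3 \<le> card B"
    then have "2 \<le> card IA" "2 \<le> card IB" using cA cB by (auto simp: max_def split: if_splits)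
    then show False using K2 by simp
  qed
  have "\<exists>I. I \<subseteq> LL (A \<union> B) \<and> finite I \<and> fv.independent I \<and> card A + card B \<le> max 1 (2 * card I)"
  proof (cases "card B \<le> card A")
    case True
    then have "card B \<le> 2" using nb by auto
    then show ?thesis using ext_step[OF cA _ c1B True IA dA dW subA] by blast
  next
    case False
    then have "card A \<le> 2" "card A \<le> card B" using nb by auto
    then have "\<exists>I. I \<subseteq> LL (A \<union> B) \<and> finite I \<and> fv.independent I \<and> card B + card A \<le> max 1 (2 * card I)"
      using ext_step[OF cB _ c1A _ IB dB dW subB] by blast
    then show ?thesis by (simp add: add.commute)
  qed
  then show ?case using fA fB neA cU by auto
qed

theorem corollary3p13:
  fixes r :: "('a::{field,finite}) rel" and S :: "(nat \<Rightarrow> 'a) set"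
  assumes "odd (card (UNIV :: 'a set))"
    and "linear_order_on (UNIV - {0}) r"
    and "S \<subseteq> vecs 4"
    and "card S = 8"
  shows "\<not> leftover (phi 4 r) S"
proof
  assume L: "leftover (phi 4 r) S"
  from L show False
  proof cases
    case (single v)
    then show False using assms(4) by simp
  next
    case (split A B \<gamma>)
    have SAB: "S = A \<union> B" by fact
    have neA: "A \<noteq> {}" by fact
    have neB: "B \<noteq> {}" by fact
    have dj: "A \<inter> B = {}" by fact
    have LA: "leftover (phi 4 r) A" by fact
    have LB: "leftover (phi 4 r) B" by fact
    have mono: "\<forall>a\<in>A. \<forall>b\<in>B. phi 4 r a b = \<gamma>" by fact
    have V: "A \<union> B \<subseteq> vecs 4" using assms(3) SAB by simp
    have VA: "A \<subseteq> vecs 4" and VB: "B \<subseteq> vecs 4" using V by auto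
    obtain IA where fA: "finite A" and IA: "IA \<subseteq> LL A" "finite IA" "fv.independent IA"
      and cA: "card A \<le> max 1 (2 * card IA)"
      using inv[OF LA VA] by blast
    obtain IB where fB: "finite B" and IB: "IB \<subseteq> LL B" "finite IB" "fv.independent IB"
      and cB: "card B \<le> max 1 (2 * card IB)"
      using inv[OF LB VB] by blast
    note nd = node[OF neA neB dj V mono]
    have K2: "card IA + card IB \<le> 3" using nd IA IB by blast
    have "card A + card B = 8" using assms(4) SAB card_Un_disjoint[OF fA fB dj] by simp
    then show False using cA cB K2 by (auto simp: max_def split: if_splits)
  qed
qed

end
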